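(* Let $\alpha\in(0,1]$ and $\beta\in(0,\alpha)$. Let $\Psi:\mathbb{R}^d\to\mathbb{R}^d$ send stable leaves to stable leaves and have finite best Lipschitz constant $L$. Then for every $K\in\mathcal{K}$, the function $K\circ\Psi$ belongs to $\mathcal{K}$ and $\|K\circ\Psi\|\le3\max(1,L)\|K\|$.
   Context: $\mathbb{R}^d=\mathbb{R}^{d_u}\times\mathbb{R}^{d_s}$ with points $(x,y)$; the stable leaves are the sets $\{x\}\times\mathbb{R}^{d_s}$, and $\Psi$ sends stable leaves to stable leaves if it maps each stable leaf into a stable leaf. $\mathcal{K}=\mathcal{K}^{\alpha,\beta}$ is the class of matrix-valued functions $K$ on $\mathbb{R}^d$ for which there is a constant $C$ such that for all $x,x'\in\mathbb{R}^{d_u}$, $y,y'\in\mathbb{R}^{d_s}$: $|K(x,y)|\le C$; $|K(x,y)-K(x',y)|\le C|x-x'|^\beta$; $|K(x,y)-K(x,y')|\le C|y-y'|^\alpha$; $|K(x,y)-K(x',y)-K(x,y')+K(x',y')|\le C|x-x'|^\beta|y-y'|^{\alpha-\beta}$. For $K\in\mathcal{K}$, $\|K\|$ is the smallest such $C$. *)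

theory Defs
  imports "HOL-Analysis.Analysis"
begin

text \<open>Points of R^d = R^{d_u} x R^{d_s} are pairs (x,y) with x :: real^'u, y :: real^'s.
  Matrix-valued functions take values in real^'n^'m (matrices), with the HOL-Analysis norm.\<close>

definition K_bounds ::
  "real \<Rightarrow> real \<Rightarrow> ((real^'u) \<times> (real^'s) \<Rightarrow> real^'n^'m) \<Rightarrow> real \<Rightarrow> bool" where
  "K_bounds \<alpha> \<beta> K C \<longleftrightarrow>
     (\<forall>x x' y y'.
        norm (K (x, y)) \<le> C \<and>
        norm (K (x, y) - K (x', y)) \<le> C * norm (x - x') powr \<beta> \<and>
        norm (K (x, y) - K (x, y')) \<le> C * norm (y - y') powr \<alpha> \<and>
        norm (K (x, y) - K (x', y) - K (x, y') + K (x', y'))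
          \<le> C * norm (x - x') powr \<beta> * norm (y - y') powr (\<alpha> - \<beta>))"

definition Kclass ::
  "real \<Rightarrow> real \<Rightarrow> ((real^'u) \<times> (real^'s) \<Rightarrow> real^'n^'m) set" where
  "Kclass \<alpha> \<beta> = {K. \<exists>C. K_bounds \<alpha> \<beta> K C}"

definition Knorm ::
  "real \<Rightarrow> real \<Rightarrow> ((real^'u) \<times> (real^'s) \<Rightarrow> real^'n^'m) \<Rightarrow> real" where
  "Knorm \<alpha> \<beta> K = Inf {C. K_bounds \<alpha> \<beta> K C}"

definition sends_stable_leaves :: "((real^'u) \<times> (real^'s) \<Rightarrow> (real^'u) \<times> (real^'s)) \<Rightarrow> bool" where
  "sends_stable_leaves \<Psi> \<longleftrightarrow> (\<forall>x. \<exists>x'. \<Psi> ` ({x} \<times> UNIV) \<subseteq> {x'} \<times> UNIV)"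

definition best_lipschitz :: "('a::metric_space \<Rightarrow> 'b::metric_space) \<Rightarrow> real" where
  "best_lipschitz f = Inf {C. lipschitz_on C UNIV f}"

end

theory Submission
  imports Defs
begin

lemma min_trick:
  fixes a b \<alpha> \<beta> :: real
  assumes "0\<le>a" "0\<le>b" "0<\<beta>" "\<beta><\<alpha>"
  shows "min (a powr \<alpha>) (b powr \<alpha>) \<le> a powr \<beta> * b powr (\<alpha>-\<beta>)"
proof (cases "a \<le> b")
  case True
  have "a powr \<alpha> = a powr \<beta> * a powr (\<alpha>-\<beta>)"
    by (simp add: powr_add[symmetric])
  also have "\<dots> \<le> a powr \<beta> * b powr (\<alpha>-\<beta>)"
    using True assms by (intro mult_left_mono powr_mono2) auto
  finally show ?thesis by simp
next
  case False
  have "b powr \<alpha> = b powr \<beta> * b powr (\<alpha>-\<beta>)"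
    by (simp add: powr_add[symmetric])
  also have "\<dots> \<le> a powr \<beta> * b powr (\<alpha>-\<beta>)"
    using False assms by (intro mult_right_mono powr_mono2) auto
  finally show ?thesis by simp
qed

lemma bdd_trick:
  fixes C t \<alpha> \<beta> v :: real
  assumes "0\<le>C" "0\<le>t" "0<\<beta>" "\<beta>\<le>\<alpha>" "v \<le> 2*C" "v \<le> C * t powr \<alpha>"
  shows "v \<le> 2*C*t powr \<beta>"
proof (cases "t \<le> 1")
  case True
  have "t powr \<alpha> \<le> t powr \<beta>" using True assms by (intro powr_mono') auto
  hence "C * t powr \<alpha> \<le> C * t powr \<beta>" using assms by (intro mult_left_mono) auto
  also have "\<dots> \<le> 2 * C * t powr \<beta>" using assms by simp
  finally show ?thesis using assms by linarith
next
  case False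
  have "1 \<le> t powr \<beta>" using False assms by (intro ge_one_powr_ge_zero) auto
  hence "2*C*1 \<le> 2*C*t powr \<beta>" using assms by (intro mult_left_mono) auto
  thus ?thesis using assms by simp
qed

lemma Mpow:
  fixes M d e :: real
  assumes "1 \<le> M" "0 \<le> d" "0 < e" "e \<le> 1"
  shows "(M*d) powr e \<le> M * d powr e"
proof -
  have "(M*d) powr e = M powr e * d powr e" using assms by (simp add: powr_mult)
  also have "M powr e \<le> M powr 1" using assms by (intro powr_mono) auto
  hence "M powr e * d powr e \<le> M * d powr e" using assms by (intro mult_right_mono) auto
  finally show ?thesis .
qed

lemma pm:
  fixes a b e :: real
  assumes "a \<le> b" "0 \<le> a" "0 \<le> e"
  shows "a powr e \<le> b powr e"
  using assms by (intro powr_mono2) auto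

theorem mainTheorem11:
  fixes \<alpha> \<beta> L :: real
    and \<Psi> :: "(real^'u) \<times> (real^'s) \<Rightarrow> (real^'u) \<times> (real^'s)"
    and K :: "(real^'u) \<times> (real^'s) \<Rightarrow> real^'n^'m"
  assumes "0 < \<alpha>" "\<alpha> \<le> 1" "0 < \<beta>" "\<beta> < \<alpha>"
    and "sends_stable_leaves \<Psi>"
    and "\<exists>C. lipschitz_on C UNIV \<Psi>"
    and "L = best_lipschitz \<Psi>"
    and "K \<in> Kclass \<alpha> \<beta>"
  shows "K \<circ> \<Psi> \<in> Kclass \<alpha> \<beta> \<and> Knorm \<alpha> \<beta> (K \<circ> \<Psi>) \<le> 3 * max 1 L * Knorm \<alpha> \<beta> K"
proof -
  note a = assms(1-4)
  define S where "S = {C. lipschitz_on C UNIV \<Psi>}"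
  have Sne: "S \<noteq> {}" using assms(6) S_def by auto
  have Lip: "lipschitz_on L UNIV \<Psi>"
  proof (rule lipschitz_onI)
    have "0 \<le> Inf S" using Sne by (intro cInf_greatest) (auto simp: S_def lipschitz_on_def)
    thus "0 \<le> L" using assms(7) by (simp add: best_lipschitz_def S_def)
  next
    fix p q :: "(real^'u) \<times> (real^'s)"
    show "dist (\<Psi> p) (\<Psi> q) \<le> L * dist p q"
    proof (cases "dist p q = 0")
      case True
      then show ?thesis by simp
    next
      case False
      hence pos: "0 < dist p q" by simp
      have "dist (\<Psi> p) (\<Psi> q) / dist p q \<le> Inf S"
      proof (rule cInf_greatest[OF Sne])
        fix C assume "C \<in> S"
        hence "dist (\<Psi> p) (\<Psi> q) \<le> C * dist p q" unfolding S_def by (auto intro: lipschitz_onD)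
        thus "dist (\<Psi> p) (\<Psi> q) / dist p q \<le> C" using pos by (simp add: divide_le_eq)
      qed
      thus ?thesis using pos assms(7) by (simp add: best_lipschitz_def S_def divide_le_eq)
    qed
  qed
  define M where "M = max 1 L"
  have M1: "1 \<le> M" by (simp add: M_def)
  have LM: "L \<le> M" by (simp add: M_def)
  have L0: "0 \<le> L" using Lip lipschitz_on_nonneg by blast
  define u where "u x = fst (\<Psi> (x, 0))" for x
  define s where "s x y = snd (\<Psi> (x, y))" for x y
  have fstu: "fst (\<Psi> (x, y)) = u x" for x y
  proof -
    obtain x' where "\<Psi> ` ({x} \<times> UNIV) \<subseteq> {x'} \<times> UNIV"
      using assms(5) unfolding sends_stable_leaves_def by blast
    hence "\<Psi> (x,y) \<in> {x'} \<times> UNIV" "\<Psi> (x,0) \<in> {x'} \<times> UNIV" by blast+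
    hence "fst (\<Psi> (x,y)) = x'" "fst (\<Psi> (x,0)) = x'" by (auto simp: mem_Times_iff)
    thus ?thesis by (simp add: u_def)
  qed
  have Psi: "\<Psi> (x,y) = (u x, s x y)" for x y
    using fstu[of x y] by (simp add: s_def prod_eq_iff)
  have dl: "dist (\<Psi> p) (\<Psi> q) \<le> M * dist p q" for p q
  proof -
    have "dist (\<Psi> p) (\<Psi> q) \<le> L * dist p q" using Lip by (auto intro: lipschitz_onD)
    also have "\<dots> \<le> M * dist p q" using LM by (intro mult_right_mono) auto
    finally show ?thesis .
  qed
  have ux: "norm (u x - u x') \<le> M * norm (x - x')" for x x'
  proof -
    have "dist (fst (\<Psi> (x,0))) (fst (\<Psi> (x',0))) \<le> M * dist (x,0::real^'s) (x',0)"
      using dist_fst_le order_trans dl by blast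
    thus ?thesis by (simp add: u_def dist_norm dist_Pair_Pair)
  qed
  have sx: "norm (s x y - s x' y) \<le> M * norm (x - x')" for x x' y
  proof -
    have "dist (snd (\<Psi> (x,y))) (snd (\<Psi> (x',y))) \<le> M * dist (x,y) (x',y)"
      using dist_snd_le order_trans dl by blast
    thus ?thesis by (simp add: s_def dist_norm dist_Pair_Pair)
  qed
  have sy: "norm (s x y - s x y') \<le> M * norm (y - y')" for x y y'
  proof -
    have "dist (snd (\<Psi> (x,y))) (snd (\<Psi> (x,y'))) \<le> M * dist (x,y) (x,y')"
      using dist_snd_le order_trans dl by blast
    thus ?thesis by (simp add: s_def dist_norm dist_Pair_Pair)
  qed
  have key: "K_bounds \<alpha> \<beta> (K \<circ> \<Psi>) (3 * M * C)" if kb: "K_bounds \<alpha> \<beta> K C" for C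
  proof -
    have B1: "norm (K p) \<le> C" for p using kb unfolding K_bounds_def by (cases p) auto
    have B2: "norm (K (a, b) - K (a', b)) \<le> C * norm (a - a') powr \<beta>" for a a' b
      using kb unfolding K_bounds_def by blast
    have B3: "norm (K (a, b) - K (a, b')) \<le> C * norm (b - b') powr \<alpha>" for a b b'
      using kb unfolding K_bounds_def by blast
    have B4: "norm (K (a, b) - K (a', b) - K (a, b') + K (a', b'))
          \<le> C * norm (a - a') powr \<beta> * norm (b - b') powr (\<alpha> - \<beta>)" for a a' b b'
      using kb unfolding K_bounds_def by blast
    have C0: "0 \<le> C" using B1[of undefined] norm_ge_zero order_trans by blast
    have D2: "norm (K p - K q) \<le> 2 * C" for p q
      using norm_triangle_ineq4[of "K p" "K q"] B1[of p] B1[of q] by linarith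
    show ?thesis unfolding K_bounds_def
    proof (intro allI conjI)
      fix x x' y y'
      show "norm ((K \<circ> \<Psi>) (x, y)) \<le> 3 * M * C"
        using B1[of "\<Psi> (x,y)"] M1 C0 mult_right_mono[of 1 "3*M" C] by simp
    next
      fix x x' :: "real^'u" and y :: "real^'s"
      define dx where "dx = norm (x - x')"
      have dx0: "0 \<le> dx" by (simp add: dx_def)
      have t1: "norm (K (u x, s x y) - K (u x', s x y)) \<le> C * M * dx powr \<beta>"
      proof -
        have "norm (K (u x, s x y) - K (u x', s x y)) \<le> C * norm (u x - u x') powr \<beta>" by (rule B2)
        also have "\<dots> \<le> C * (M * dx) powr \<beta>"
          using ux[of x x'] a C0 by (intro mult_left_mono pm) (auto simp: dx_def)
        also have "\<dots> \<le> C * (M * dx powr \<beta>)"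
          using Mpow[OF M1 dx0, of \<beta>] a C0 by (intro mult_left_mono) auto
        finally show ?thesis by simp
      qed
      have t2: "norm (K (u x', s x y) - K (u x', s x' y)) \<le> 2 * C * M * dx powr \<beta>"
      proof -
        have "norm (K (u x', s x y) - K (u x', s x' y)) \<le> C * norm (s x y - s x' y) powr \<alpha>" by (rule B3)
        also have "\<dots> \<le> C * (M * dx) powr \<alpha>"
          using sx[of x y x'] a C0 by (intro mult_left_mono pm) (auto simp: dx_def)
        finally have "norm (K (u x', s x y) - K (u x', s x' y)) \<le> 2 * C * (M*dx) powr \<beta>"
          using D2 a C0 M1 dx0 by (intro bdd_trick[where \<alpha>=\<alpha>]) auto
        also have "\<dots> \<le> 2 * C * (M * dx powr \<beta>)"
          using Mpow[OF M1 dx0, of \<beta>] a C0 by (intro mult_left_mono) auto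
        finally show ?thesis by simp
      qed
      have "norm (K (u x, s x y) - K (u x', s x' y)) \<le>
          norm (K (u x, s x y) - K (u x', s x y)) + norm (K (u x', s x y) - K (u x', s x' y))"
        by (rule order_trans[OF _ norm_triangle_ineq]) simp
      thus "norm ((K \<circ> \<Psi>) (x, y) - (K \<circ> \<Psi>) (x', y)) \<le> 3 * M * C * norm (x - x') powr \<beta>"
        using t1 t2 by (simp add: Psi dx_def algebra_simps)
    next
      fix x :: "real^'u" and y y' :: "real^'s"
      define dy where "dy = norm (y - y')"
      have dy0: "0 \<le> dy" by (simp add: dy_def)
      have "norm (K (u x, s x y) - K (u x, s x y')) \<le> C * norm (s x y - s x y') powr \<alpha>" by (rule B3)
      also have "\<dots> \<le> C * (M * dy) powr \<alpha>"
        using sy[of x y y'] a C0 by (intro mult_left_mono pm) (auto simp: dy_def)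
      also have "\<dots> \<le> C * (M * dy powr \<alpha>)"
        using Mpow[OF M1 dy0, of \<alpha>] a C0 by (intro mult_left_mono) auto
      also have "\<dots> \<le> 3 * M * C * dy powr \<alpha>"
        using C0 M1 by (simp add: algebra_simps)
      finally show "norm ((K \<circ> \<Psi>) (x, y) - (K \<circ> \<Psi>) (x, y')) \<le> 3 * M * C * norm (y - y') powr \<alpha>"
        by (simp add: Psi dy_def)
    next
      fix x x' :: "real^'u" and y y' :: "real^'s"
      define dx where "dx = norm (x - x')"
      have dx0: "0 \<le> dx" by (simp add: dx_def)
      define dy where "dy = norm (y - y')"
      have dy0: "0 \<le> dy" by (simp add: dy_def)
      have prodb: "(M*dx) powr \<beta> * (M*dy) powr (\<alpha>-\<beta>) \<le> M * (dx powr \<beta> * dy powr (\<alpha>-\<beta>))"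
      proof -
        have "(M*dx) powr \<beta> * (M*dy) powr (\<alpha>-\<beta>) = M powr \<alpha> * (dx powr \<beta> * dy powr (\<alpha>-\<beta>))"
          using M1 dx0 dy0 by (simp add: powr_mult powr_add[symmetric] algebra_simps)
        also have "M powr \<alpha> \<le> M powr 1" using M1 a powr_mono[of \<alpha> 1 M] by linarith
        hence "M powr \<alpha> * (dx powr \<beta> * dy powr (\<alpha>-\<beta>)) \<le> M * (dx powr \<beta> * dy powr (\<alpha>-\<beta>))"
          using M1 by (intro mult_right_mono) auto
        finally show ?thesis .
      qed
      let ?u = "u x" and ?u' = "u x'" and ?s = "s x y" and ?s1 = "s x' y"
        and ?s' = "s x y'" and ?s1' = "s x' y'"
      have f1: "norm (K (?u, ?s) - K (?u', ?s) - K (?u, ?s') + K (?u', ?s'))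
           \<le> C * M * (dx powr \<beta> * dy powr (\<alpha>-\<beta>))"
      proof -
        have "norm (K (?u, ?s) - K (?u', ?s) - K (?u, ?s') + K (?u', ?s'))
            \<le> C * norm (?u - ?u') powr \<beta> * norm (?s - ?s') powr (\<alpha> - \<beta>)" by (rule B4)
        also have "\<dots> \<le> C * ((M*dx) powr \<beta> * (M*dy) powr (\<alpha>-\<beta>))"
          unfolding mult.assoc using ux[of x x'] sy[of x y y'] a C0
          by (intro mult_left_mono mult_mono pm) (auto simp: dx_def dy_def)
        also have "\<dots> \<le> C * (M * (dx powr \<beta> * dy powr (\<alpha>-\<beta>)))"
          using prodb C0 by (intro mult_left_mono) auto
        finally show ?thesis by simp
      qed
      define g where "g = K (?u', ?s) - K (?u', ?s1) - K (?u', ?s') + K (?u', ?s1')"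
      have gx: "norm g \<le> 2 * C * (M*dx) powr \<alpha>"
      proof -
        have "g = (K (?u', ?s) - K (?u', ?s1)) - (K (?u', ?s') - K (?u', ?s1'))"
          by (simp add: g_def algebra_simps)
        hence "norm g \<le> norm (K (?u', ?s) - K (?u', ?s1)) + norm (K (?u', ?s') - K (?u', ?s1'))"
          by (metis norm_triangle_ineq4)
        also have "\<dots> \<le> C * (M*dx) powr \<alpha> + C * (M*dx) powr \<alpha>"
          using B3[of ?u' ?s ?s1] B3[of ?u' ?s' ?s1'] sx[of x y x'] sx[of x y' x'] a C0
            mult_left_mono[OF pm[OF sx[of x y x'] _, of \<alpha>] C0]
            mult_left_mono[OF pm[OF sx[of x y' x'] _, of \<alpha>] C0]
          by (simp add: dx_def; (smt (verit))?)
        finally show ?thesis by simp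
      qed
      have gy: "norm g \<le> 2 * C * (M*dy) powr \<alpha>"
      proof -
        have "g = (K (?u', ?s) - K (?u', ?s')) - (K (?u', ?s1) - K (?u', ?s1'))"
          by (simp add: g_def algebra_simps)
        hence "norm g \<le> norm (K (?u', ?s) - K (?u', ?s')) + norm (K (?u', ?s1) - K (?u', ?s1'))"
          by (metis norm_triangle_ineq4)
        also have "\<dots> \<le> C * (M*dy) powr \<alpha> + C * (M*dy) powr \<alpha>"
          using B3[of ?u' ?s ?s'] B3[of ?u' ?s1 ?s1'] a C0
            mult_left_mono[OF pm[OF sy[of x y y'] _, of \<alpha>] C0]
            mult_left_mono[OF pm[OF sy[of x' y y'] _, of \<alpha>] C0]
          by (simp add: dy_def; (smt (verit))?)
        finally show ?thesis by simp
      qed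
      have f2: "norm g \<le> 2 * C * M * (dx powr \<beta> * dy powr (\<alpha>-\<beta>))"
      proof -
        have "norm g \<le> 2 * C * min ((M*dx) powr \<alpha>) ((M*dy) powr \<alpha>)"
          using gx gy by (simp add: min_def)
        also have "\<dots> \<le> 2 * C * ((M*dx) powr \<beta> * (M*dy) powr (\<alpha>-\<beta>))"
          using min_trick[of "M*dx" "M*dy" \<beta> \<alpha>] a C0 M1 dx0 dy0 by (intro mult_left_mono) auto
        also have "\<dots> \<le> 2 * C * (M * (dx powr \<beta> * dy powr (\<alpha>-\<beta>)))"
          using prodb C0 by (intro mult_left_mono) auto
        finally show ?thesis by simp
      qed
      have "K (?u, ?s) - K (?u', ?s1) - K (?u, ?s') + K (?u', ?s1')
          = (K (?u, ?s) - K (?u', ?s) - K (?u, ?s') + K (?u', ?s')) + g"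
        by (simp add: g_def algebra_simps)
      hence "norm (K (?u, ?s) - K (?u', ?s1) - K (?u, ?s') + K (?u', ?s1'))
          \<le> norm (K (?u, ?s) - K (?u', ?s) - K (?u, ?s') + K (?u', ?s')) + norm g"
        by (metis norm_triangle_ineq)
      thus "norm ((K \<circ> \<Psi>) (x, y) - (K \<circ> \<Psi>) (x', y) - (K \<circ> \<Psi>) (x, y') + (K \<circ> \<Psi>) (x', y'))
          \<le> 3 * M * C * norm (x - x') powr \<beta> * norm (y - y') powr (\<alpha> - \<beta>)"
        using f1 f2 by (simp add: Psi dx_def dy_def algebra_simps)
    qed
  qed
  obtain C0 where C0: "K_bounds \<alpha> \<beta> K C0" using assms(8) by (auto simp: Kclass_def)
  have mem: "K \<circ> \<Psi> \<in> Kclass \<alpha> \<beta>" using key[OF C0] by (auto simp: Kclass_def)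
  have bdd: "bdd_below {C. K_bounds \<alpha> \<beta> (K \<circ> \<Psi>) C}"
    by (rule bdd_belowI[of _ 0]) (auto simp: K_bounds_def intro: order_trans[OF norm_ge_zero])
  have M0: "0 < 3 * M" using M1 by simp
  have "Knorm \<alpha> \<beta> (K \<circ> \<Psi>) / (3*M) \<le> Knorm \<alpha> \<beta> K"
    unfolding Knorm_def
  proof (rule cInf_greatest)
    show "{C. K_bounds \<alpha> \<beta> K C} \<noteq> {}" using C0 by auto
  next
    fix C assume "C \<in> {C. K_bounds \<alpha> \<beta> K C}"
    hence "Inf {C. K_bounds \<alpha> \<beta> (K \<circ> \<Psi>) C} \<le> 3 * M * C"
      using key bdd by (intro cInf_lower) auto
    thus "Inf {C. K_bounds \<alpha> \<beta> (K \<circ> \<Psi>) C} / (3*M) \<le> C"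
      using M0 by (simp add: divide_le_eq mult.commute)
  qed
  hence "Knorm \<alpha> \<beta> (K \<circ> \<Psi>) \<le> 3 * M * Knorm \<alpha> \<beta> K"
    using M0 by (simp add: divide_le_eq mult.commute)
  thus ?thesis using mem by (simp add: M_def)
qed

end
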